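(* For $n\ge3$ define the graphon $W_n$ on $[0,1]^2$ by $W_n(x,y)=1$ if ($x\le\frac12-\frac1n$ and $y\ge\frac12+\frac1n$), or ($x\ge\frac12+\frac1n$ and $y\le\frac12-\frac1n$), or ($x,y\in[\frac12-e^{-n}-\frac1n,\ \frac12+e^{-n}+\frac1n]$), and $W_n(x,y)=0$ otherwise. Let $W(x,y)=1$ if exactly one of $x,y$ lies in $[0,\frac12]$ and $W(x,y)=0$ otherwise. Then each $W_n$ is connected, $\|W_n-W\|_{L^1([0,1]^2)}\to0$, $h_{W_n}\to0$, but $h_W=\frac12$. In particular $h_{W_n}\not\to h_W$.
   Context: A graphon is a measurable symmetric $W:[0,1]^2\to[0,1]$. For measurable $A,B\subseteq[0,1]$, $e_W(A,B)=\int_{A\times B}W$, $\mathrm{vol}_W(A)=e_W(A,[0,1])$. $W$ is connected if $e_W(A,A^c)\ne0$ for every measurable $A$ with $0<\mu_L(A)<1$ ($\mu_L$ Lebesgue measure). The Cheeger constant is $h_W=\inf_{A:\,0<\mu_L(A)<1}\frac{e_W(A,A^c)}{\min\{\mathrm{vol}_W(A),\mathrm{vol}_W(A^c)\}}$. *)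

theory Defs
  imports "HOL-Analysis.Analysis"
begin

definition unit_sets :: "real set set" where
  "unit_sets = {A. A \<in> sets lebesgue \<and> A \<subseteq> {0..1}}"

definition is_graphon :: "(real \<Rightarrow> real \<Rightarrow> real) \<Rightarrow> bool" where
  "is_graphon W \<longleftrightarrow>
     (\<lambda>z. W (fst z) (snd z)) \<in> borel_measurable (lebesgue \<Otimes>\<^sub>M lebesgue) \<and>
     (\<forall>x\<in>{0..1}. \<forall>y\<in>{0..1}. W x y = W y x \<and> 0 \<le> W x y \<and> W x y \<le> 1)"

definition e_W :: "(real \<Rightarrow> real \<Rightarrow> real) \<Rightarrow> real set \<Rightarrow> real set \<Rightarrow> real" where
  "e_W W A B = (LINT z:A \<times> B|(lebesgue \<Otimes>\<^sub>M lebesgue). W (fst z) (snd z))"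

definition vol_W :: "(real \<Rightarrow> real \<Rightarrow> real) \<Rightarrow> real set \<Rightarrow> real" where
  "vol_W W A = e_W W A {0..1}"

definition graphon_connected :: "(real \<Rightarrow> real \<Rightarrow> real) \<Rightarrow> bool" where
  "graphon_connected W \<longleftrightarrow>
     (\<forall>A\<in>unit_sets. 0 < measure lebesgue A \<and> measure lebesgue A < 1 \<longrightarrow>
        e_W W A ({0..1} - A) \<noteq> 0)"

definition cheeger :: "(real \<Rightarrow> real \<Rightarrow> real) \<Rightarrow> real" where
  "cheeger W = (INF A \<in> {A\<in>unit_sets. 0 < measure lebesgue A \<and> measure lebesgue A < 1}.
      e_W W A ({0..1} - A) / min (vol_W W A) (vol_W W ({0..1} - A)))"

definition L1_dist :: "(real \<Rightarrow> real \<Rightarrow> real) \<Rightarrow> (real \<Rightarrow> real \<Rightarrow> real) \<Rightarrow> real" where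
  "L1_dist U V = (LINT z:{0..1} \<times> {0..1}|(lebesgue \<Otimes>\<^sub>M lebesgue). \<bar>U (fst z) (snd z) - V (fst z) (snd z)\<bar>)"

definition Wn :: "nat \<Rightarrow> real \<Rightarrow> real \<Rightarrow> real" where
  "Wn n x y =
     (if (x \<le> 1/2 - 1/real n \<and> y \<ge> 1/2 + 1/real n)
       \<or> (x \<ge> 1/2 + 1/real n \<and> y \<le> 1/2 - 1/real n)
       \<or> (x \<in> {1/2 - exp (- real n) - 1/real n .. 1/2 + exp (- real n) + 1/real n} \<and>
          y \<in> {1/2 - exp (- real n) - 1/real n .. 1/2 + exp (- real n) + 1/real n})
      then 1 else 0)"

definition Wlim :: "real \<Rightarrow> real \<Rightarrow> real" where
  "Wlim x y = (if (x \<in> {0..1/2}) \<noteq> (y \<in> {0..1/2}) then 1 else 0)"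

end

theory Submission
  imports Defs "HOL-Real_Asymp.Real_Asymp"
begin

abbreviation M2 :: "(real \<times> real) measure" where "M2 \<equiv> lebesgue \<Otimes>\<^sub>M lebesgue"
lemma id_leb: "(\<lambda>x::real. x) \<in> borel_measurable lebesgue"
  by (rule measurable_completion) simp
lemma fst_bm[measurable]: "fst \<in> borel_measurable M2"
  by (rule measurable_compose[OF measurable_fst id_leb[unfolded id_def]])
lemma snd_bm[measurable]: "snd \<in> borel_measurable M2"
  by (rule measurable_compose[OF measurable_snd id_leb])

lemma sfl: "sigma_finite_measure (lebesgue::real measure)"
proof
  obtain A :: "real set set" where A: "countable A" "A \<subseteq> sets lborel" "\<Union>A = space lborel" "\<forall>a\<in>A. emeasure lborel a \<noteq> \<infinity>"
    using lborel.sigma_finite_countable by blast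
  show "\<exists>A. countable A \<and> A \<subseteq> sets (lebesgue::real measure) \<and> \<Union> A = space lebesgue \<and> (\<forall>a\<in>A. emeasure lebesgue a \<noteq> \<infinity>)"
    apply (rule exI[of _ A]) using A by (auto simp: emeasure_completion)
qed

lemma Icc_leb[simp]: "{a..b::real} \<in> sets lebesgue"
  by simp

lemma meas_Icc: "a \<le> b \<Longrightarrow> measure lebesgue {a..b::real} = b - a"
  by simp

lemma emeas_unit: assumes "S \<subseteq> {0..1::real}" shows "emeasure lebesgue S \<le> 1"
proof -
  have "emeasure lebesgue S \<le> emeasure lebesgue {0..1::real}"
    by (rule emeasure_mono[OF assms]) simp
  also have "\<dots> = 1" by simp
  finally show ?thesis .
qed

lemma emeas_unit_fin: assumes "S \<subseteq> {0..1::real} " shows "emeasure lebesgue S \<noteq> \<infinity>"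
proof
  assume "emeasure lebesgue S = \<infinity>"
  then show False using emeas_unit[OF assms] by (simp add: top_unique)
qed

lemma prod_emeas: "S \<in> sets lebesgue \<Longrightarrow> T \<in> sets lebesgue \<Longrightarrow>
  emeasure M2 (S \<times> T) = emeasure lebesgue S * emeasure lebesgue T"
  by (rule sigma_finite_measure.emeasure_pair_measure_Times[OF sfl])

lemma prod_meas: assumes "S \<in> sets lebesgue" "T \<in> sets lebesgue" "S \<subseteq> {0..1}" "T \<subseteq> {0..1}"
  shows "measure M2 (S \<times> T) = measure lebesgue S * measure lebesgue T"
proof -
  have "emeasure M2 (S \<times> T) = ennreal (measure lebesgue S) * ennreal (measure lebesgue T)"
    using prod_emeas[OF assms(1,2)] emeas_unit_fin[OF assms(3)] emeas_unit_fin[OF assms(4)]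
    by (simp add: emeasure_eq_ennreal_measure)
  also have "\<dots> = ennreal (measure lebesgue S * measure lebesgue T)"
    by (simp add: ennreal_mult)
  finally show ?thesis by (simp add: measure_def)
qed

lemma unit_sq_fin: assumes "X \<in> sets M2" "X \<subseteq> {0..1} \<times> {0..1}" shows "X \<in> fmeasurable M2"
proof -
  have "emeasure M2 X \<le> emeasure M2 ({0..1} \<times> {0..1})"
    by (rule emeasure_mono[OF assms(2)]) simp
  also have "\<dots> = 1" by (simp add: prod_emeas)
  finally show ?thesis using assms(1) by (simp add: fmeasurable_def top.not_eq_extremum le_less_trans)
qed

lemma int01:
  fixes G :: "real \<times> real \<Rightarrow> real"
  assumes "\<forall>z. G z = 0 \<or> G z = 1"
  shows "(LINT z:X|M2. G z) = measure M2 (X \<inter> {z. G z = 1})"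
proof -
  have "(\<lambda>z. indicator X z *\<^sub>R G z) = indicator (X \<inter> {z. G z = 1})"
    using assms by (auto simp: indicator_def fun_eq_iff)
  then show ?thesis unfolding set_lebesgue_integral_def by (simp add: space_pair_measure)
qed

definition Eset :: "(real \<Rightarrow> real \<Rightarrow> real) \<Rightarrow> (real \<times> real) set" where
  "Eset W = {z. W (fst z) (snd z) = 1}"

lemma eW01: "\<forall>x y. W x y = 0 \<or> W x y = 1 \<Longrightarrow> e_W W A B = measure M2 ((A \<times> B) \<inter> Eset W)"
  unfolding e_W_def Eset_def by (rule int01) auto

lemma Eset_meas: "(\<lambda>z. W (fst z) (snd z)) \<in> borel_measurable M2 \<Longrightarrow> Eset W \<in> sets M2"
  unfolding Eset_def by (drule measurable_sets[of _ _ _ "{1}"]) (auto simp: space_pair_measure vimage_def)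

lemma unit_sets_sub: "A \<in> unit_sets \<Longrightarrow> A \<subseteq> {0..1}" and unit_sets_leb: "A \<in> unit_sets \<Longrightarrow> A \<in> sets lebesgue"
  by (auto simp: unit_sets_def)

lemma rect_lower:
  assumes W01: "\<forall>x y. W x y = 0 \<or> W x y = 1" and Wm: "(\<lambda>z. W (fst z) (snd z)) \<in> borel_measurable M2"
    and A: "A \<in> unit_sets" and B: "B \<in> unit_sets" and S: "S \<subseteq> A" "S \<in> sets lebesgue"
    and T: "T \<subseteq> B" "T \<in> sets lebesgue" and one: "\<And>x y. x \<in> S \<Longrightarrow> y \<in> T \<Longrightarrow> W x y = 1"
  shows "measure lebesgue S * measure lebesgue T \<le> e_W W A B"
proof -
  have AB: "A \<subseteq> {0..1}" "B \<subseteq> {0..1}" "A \<in> sets lebesgue" "B \<in> sets lebesgue"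
    using A B by (auto simp: unit_sets_def)
  have "measure lebesgue S * measure lebesgue T = measure M2 (S \<times> T)"
    using S T AB by (intro prod_meas[symmetric]) auto
  also have "\<dots> \<le> measure M2 ((A \<times> B) \<inter> Eset W)"
  proof (rule measure_mono_fmeasurable)
    show "S \<times> T \<subseteq> A \<times> B \<inter> Eset W" using S T one by (auto simp: Eset_def)
    show "S \<times> T \<in> sets M2" using S T by simp
    show "A \<times> B \<inter> Eset W \<in> fmeasurable M2"
      using AB Eset_meas[OF Wm] by (intro unit_sq_fin) auto
  qed
  finally show ?thesis using eW01[OF W01] by simp
qed

lemma eW_upper:
  assumes W01: "\<forall>x y. W x y = 0 \<or> W x y = 1" and Wm: "(\<lambda>z. W (fst z) (snd z)) \<in> borel_measurable M2"
    and U: "U \<in> fmeasurable M2" and sub: "(A \<times> B) \<inter> Eset W \<subseteq> U"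
    and AB: "A \<in> sets lebesgue" "B \<in> sets lebesgue"
  shows "e_W W A B \<le> measure M2 U"
  unfolding eW01[OF W01]
  by (rule measure_mono_fmeasurable[OF sub _ U]) (use AB Eset_meas[OF Wm] in auto)

lemma eW_nonneg: "\<forall>x y. W x y = 0 \<or> W x y = 1 \<Longrightarrow> 0 \<le> e_W W A B"
  by (simp add: eW01)
lemma arith_W: fixes a b :: real
  assumes "0 \<le> a" "a \<le> 1/2" "0 \<le> b" "b \<le> 1/2" "0 < a + b" "a + b < 1"
  shows "1/2 \<le> (a*(1/2-b) + b*(1/2-a)) / min (a*(1/2)+b*(1/2)) ((1/2-a)*(1/2)+(1/2-b)*(1/2))"
proof (cases "a + b \<le> 1/2")
  case True
  have m: "min (a*(1/2)+b*(1/2)) ((1/2-a)*(1/2)+(1/2-b)*(1/2)) = (a+b)/2" using True by (simp add: min_def field_simps)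
  have "(a+b)^2/2 - 2*a*b = (a-b)^2/2" by (simp add: power2_eq_square field_simps)
  moreover have "0 \<le> (a-b)^2/2" by simp
  ultimately have "2*a*b \<le> (a+b)^2/2" by linarith
  have "(a+b)^2 \<le> (a+b)/2" using True assms by (simp add: power2_eq_square)
  show ?thesis unfolding m using assms \<open>2*a*b \<le> _\<close> \<open>(a+b)^2 \<le> _\<close> by (simp add: field_simps)
next
  case False
  have m: "min (a*(1/2)+b*(1/2)) ((1/2-a)*(1/2)+(1/2-b)*(1/2)) = (1-a-b)/2" using False by (simp add: min_def field_simps)
  define a' where "a' = 1/2 - a"
  define b' where "b' = 1/2 - b"
  have e: "a*(1/2-b) + b*(1/2-a) = a'*(1/2-b') + b'*(1/2-a')" by (simp add: a'_def b'_def algebra_simps)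
  have "(a'+b')^2/2 - 2*a'*b' = (a'-b')^2/2" by (simp add: power2_eq_square field_simps)
  moreover have "0 \<le> (a'-b')^2/2" by simp
  ultimately have "2*a'*b' \<le> (a'+b')^2/2" by linarith
  have "(a'+b')^2 \<le> (a'+b')/2" using False assms by (simp add: power2_eq_square a'_def b'_def)
  show ?thesis unfolding m e using assms \<open>2*a'*b' \<le> _\<close> \<open>(a'+b')^2 \<le> _\<close> False by (simp add: field_simps a'_def b'_def)
qed

definition dd :: "nat \<Rightarrow> real" where "dd n = exp (- real n)"
definition pp :: "nat \<Rightarrow> real" where "pp n = 1/2 - 1/real n"
definition qq :: "nat \<Rightarrow> real" where "qq n = 1/2 + 1/real n"
definition c1 :: "nat \<Rightarrow> real" where "c1 n = 1/2 - exp (- real n) - 1/real n"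
definition c2 :: "nat \<Rightarrow> real" where "c2 n = 1/2 + exp (- real n) + 1/real n"

lemma Wn_eq: "Wn n x y = (if (x \<le> pp n \<and> qq n \<le> y) \<or> (qq n \<le> x \<and> y \<le> pp n)
   \<or> (x \<in> {c1 n..c2 n} \<and> y \<in> {c1 n..c2 n}) then 1 else 0)"
  unfolding Wn_def pp_def qq_def c1_def c2_def by simp

lemma Wn01: "\<forall>x y. Wn n x y = 0 \<or> Wn n x y = 1"
  by (simp add: Wn_def)
lemma Wlim01: "\<forall>x y. Wlim x y = 0 \<or> Wlim x y = 1"
  by (simp add: Wlim_def)

lemma Wn_meas: "(\<lambda>z. Wn n (fst z) (snd z)) \<in> borel_measurable M2"
  unfolding Wn_def atLeastAtMost_iff by measurable
lemma Wlim_meas: "(\<lambda>z. Wlim (fst z) (snd z)) \<in> borel_measurable M2"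
  unfolding Wlim_def atLeastAtMost_iff by measurable

lemma dd_bound: assumes "3 \<le> n" shows "0 < dd n" "dd n \<le> 2/17"
proof -
  show "0 < dd n" by (simp add: dd_def)
  have "17/2 \<le> exp (3::real)"
    using exp_lower_Taylor_quadratic[of 3] by simp
  also have "\<dots> \<le> exp (real n)" using assms by simp
  finally have "17/2 \<le> exp (real n)" .
  then show "dd n \<le> 2/17" unfolding dd_def exp_minus
    by (simp add: field_simps)
qed

lemma n_facts: assumes "3 \<le> n" shows "0 < 1/real n" "1/real n \<le> 1/3"
  using assms by (auto simp: field_simps)

lemma num_facts: assumes "3 \<le> n"
  shows "1/25 < c1 n" "c1 n < pp n" "pp n < 1/2" "1/2 < qq n" "qq n < c2 n" "c2 n < 24/25"
    "c1 n = pp n - dd n" "c2 n = qq n + dd n" "c2 n - c1 n = 2 * dd n + 2 / real n"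
    "pp n - c1 n = dd n" "c2 n - qq n = dd n" "0 < dd n" "0 \<le> c1 n" "c2 n \<le> 1"
  using dd_bound[OF assms] n_facts[OF assms] unfolding c1_def c2_def pp_def qq_def dd_def
  by (linarith+)

lemma unit_fmeas: assumes "Y \<in> sets lebesgue" "Y \<subseteq> {0..1::real}" shows "Y \<in> fmeasurable lebesgue"
proof (rule fmeasurableI[OF assms(1)])
  have "emeasure lebesgue Y \<noteq> \<infinity>" by (rule emeas_unit_fin[OF assms(2)])
  then show "emeasure lebesgue Y < \<infinity>" by (simp add: less_top[symmetric])
qed

lemma Wn_conn: assumes n: "3 \<le> n" shows "graphon_connected (Wn n)"
  unfolding graphon_connected_def
proof (intro ballI impI)
  fix A assume A: "A \<in> unit_sets" and mA: "0 < measure lebesgue A \<and> measure lebesgue A < 1"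
  let ?B = "{0..1} - A"
  let ?m = "measure (lebesgue :: real measure)"
  have Asub: "A \<subseteq> {0..1}" and Aleb: "A \<in> sets lebesgue" using A by (auto simp: unit_sets_def)
  have B: "?B \<in> unit_sets" using Aleb by (auto simp: unit_sets_def)
  note nf = num_facts[OF n]
  define L where "L = {0..pp n}"
  define R where "R = {qq n..1}"
  define C where "C = {c1 n..c2 n}"
  define SL where "SL = {c1 n..pp n}"
  define SR where "SR = {qq n..c2 n}"
  have sets: "L \<in> sets lebesgue" "R \<in> sets lebesgue" "C \<in> sets lebesgue" "SL \<in> sets lebesgue" "SR \<in> sets lebesgue"
    by (auto simp: L_def R_def C_def SL_def SR_def)
  have subs: "L \<subseteq> {0..1}" "R \<subseteq> {0..1}" "C \<subseteq> {0..1}" "SL \<subseteq> L" "SL \<subseteq> C" "SR \<subseteq> R" "SR \<subseteq> C"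
    "{0..1} \<subseteq> L \<union> C \<union> R"
    using nf by (auto simp: L_def R_def C_def SL_def SR_def)
  have mSL: "?m SL = dd n" "?m SR = dd n" using nf by (auto simp: SL_def SR_def)
  have mono: "?m X \<le> ?m Y" if "X \<subseteq> Y" "X \<in> sets lebesgue" "Y \<in> sets lebesgue" "Y \<subseteq> {0..1}" for X Y :: "real set"
    by (rule measure_mono_fmeasurable[OF that(1) that(2) unit_fmeas[OF that(3,4)]])
  have cover: "?m X \<le> ?m (X \<inter> P) + ?m (X \<inter> Q)" if "X \<subseteq> P \<union> Q" "X \<in> sets lebesgue" "P \<in> sets lebesgue" "Q \<in> sets lebesgue" "X \<subseteq> {0..1}" for X P Q :: "real set"
  proof -
    have "X = (X \<inter> P) \<union> (X \<inter> Q)" using that by auto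
    then have "?m X = ?m ((X \<inter> P) \<union> (X \<inter> Q))" by simp
    also have "\<dots> \<le> ?m (X \<inter> P) + ?m (X \<inter> Q)" using that by (intro measure_Un_le) auto
    finally show ?thesis .
  qed
  have Bleb: "?B \<in> sets lebesgue" using Aleb by auto
  have mB: "?m ?B = 1 - ?m A"
    using Aleb Asub by (subst measure_Diff) (auto simp: emeas_unit_fin)
  show "e_W (Wn n) A ?B \<noteq> 0"
  proof
    assume e0: "e_W (Wn n) A ?B = 0"
    have low: "?m S * ?m T \<le> 0" if "S \<subseteq> A" "S \<in> sets lebesgue" "T \<subseteq> ?B" "T \<in> sets lebesgue"
      "\<And>x y. x \<in> S \<Longrightarrow> y \<in> T \<Longrightarrow> Wn n x y = 1" for S T
      using rect_lower[OF Wn01 Wn_meas A B that] e0 by simp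
    have z: "?m S = 0 \<or> ?m T = 0" if "?m S * ?m T \<le> 0" for S T
      using that measure_nonneg[of lebesgue S] measure_nonneg[of lebesgue T]
      by (metis mult_pos_pos order.strict_iff_not order_le_less)
    have p1: "?m (A \<inter> C) = 0 \<or> ?m (?B \<inter> C) = 0"
      by (rule z, rule low) (use Aleb Bleb sets in \<open>auto simp: Wn_eq C_def\<close>)
    have p2: "?m (A \<inter> L) = 0 \<or> ?m (?B \<inter> R) = 0"
      by (rule z, rule low) (use Aleb Bleb sets in \<open>auto simp: Wn_eq L_def R_def\<close>)
    have p3: "?m (A \<inter> R) = 0 \<or> ?m (?B \<inter> L) = 0"
      by (rule z, rule low) (use Aleb Bleb sets in \<open>auto simp: Wn_eq L_def R_def\<close>)
    have cA: "?m A \<le> ?m (A \<inter> L) + ?m (A \<inter> C) + ?m (A \<inter> R)"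
    proof -
      have "?m A \<le> ?m (A \<inter> (L \<union> C)) + ?m (A \<inter> R)"
        using subs Asub Aleb sets by (intro cover) auto
      moreover have "?m (A \<inter> (L \<union> C)) \<le> ?m (A \<inter> (L \<union> C) \<inter> L) + ?m (A \<inter> (L \<union> C) \<inter> C)"
        using subs Asub Aleb sets by (intro cover) auto
      moreover have "A \<inter> (L \<union> C) \<inter> L = A \<inter> L" "A \<inter> (L \<union> C) \<inter> C = A \<inter> C" by auto
      ultimately show ?thesis by simp
    qed
    have cB: "?m ?B \<le> ?m (?B \<inter> L) + ?m (?B \<inter> C) + ?m (?B \<inter> R)"
    proof -
      have "?m ?B \<le> ?m (?B \<inter> (L \<union> C)) + ?m (?B \<inter> R)"
        using subs Bleb sets by (intro cover) auto
      moreover have "?m (?B \<inter> (L \<union> C)) \<le> ?m (?B \<inter> (L \<union> C) \<inter> L) + ?m (?B \<inter> (L \<union> C) \<inter> C)"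
        using subs Bleb sets by (intro cover) auto
      moreover have "?B \<inter> (L \<union> C) \<inter> L = ?B \<inter> L" "?B \<inter> (L \<union> C) \<inter> C = ?B \<inter> C" by auto
      ultimately show ?thesis by simp
    qed
    have sL: "dd n \<le> ?m (A \<inter> SL) + ?m (?B \<inter> SL)"
    proof -
      have "?m SL \<le> ?m (SL \<inter> A) + ?m (SL \<inter> ?B)"
        by (rule cover) (use subs sets Aleb Bleb in auto)
      then show ?thesis using mSL by (simp only: Int_commute)
    qed
    have sR: "dd n \<le> ?m (A \<inter> SR) + ?m (?B \<inter> SR)"
    proof -
      have "?m SR \<le> ?m (SR \<inter> A) + ?m (SR \<inter> ?B)"
        by (rule cover) (use subs sets Aleb Bleb in auto)
      then show ?thesis using mSL by (simp only: Int_commute)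
    qed
    have i1: "?m (A \<inter> SL) \<le> ?m (A \<inter> L)" "?m (A \<inter> SL) \<le> ?m (A \<inter> C)"
      "?m (?B \<inter> SL) \<le> ?m (?B \<inter> L)" "?m (?B \<inter> SL) \<le> ?m (?B \<inter> C)"
      "?m (A \<inter> SR) \<le> ?m (A \<inter> R)" "?m (A \<inter> SR) \<le> ?m (A \<inter> C)"
      "?m (?B \<inter> SR) \<le> ?m (?B \<inter> R)" "?m (?B \<inter> SR) \<le> ?m (?B \<inter> C)"
      using subs sets Aleb Bleb by (intro mono; auto)+
    have nn: "0 \<le> ?m (A \<inter> SL)" "0 \<le> ?m (A \<inter> SR)" "0 \<le> ?m (?B \<inter> SL)" "0 \<le> ?m (?B \<inter> SR)"
      "0 \<le> ?m (A \<inter> L)" "0 \<le> ?m (A \<inter> R)" "0 \<le> ?m (?B \<inter> L)" "0 \<le> ?m (?B \<inter> R)"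
      by auto
    show False
      using p1 p2 p3 cA cB sL sR i1 nn mA mB nf(12) by linarith
  qed
qed

definition idx :: "real set set" where
  "idx = {A\<in>unit_sets. 0 < measure lebesgue A \<and> measure lebesgue A < 1}"

definition ratio :: "(real \<Rightarrow> real \<Rightarrow> real) \<Rightarrow> real set \<Rightarrow> real" where
  "ratio W A = e_W W A ({0..1} - A) / min (vol_W W A) (vol_W W ({0..1} - A))"

lemma cheeger_eq: "cheeger W = (INF A\<in>idx. ratio W A)"
  unfolding cheeger_def idx_def ratio_def by simp

lemma ratio_nonneg: "\<forall>x y. W x y = 0 \<or> W x y = 1 \<Longrightarrow> 0 \<le> ratio W A"
  unfolding ratio_def vol_W_def using eW_nonneg[of W] by (simp add: min_def)

lemma cheeger_le: "\<forall>x y. W x y = 0 \<or> W x y = 1 \<Longrightarrow> A \<in> idx \<Longrightarrow> cheeger W \<le> ratio W A"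
  unfolding cheeger_eq
  by (rule cINF_lower) (auto intro!: bdd_belowI2[where m=0] ratio_nonneg)

lemma cheeger_ge: "\<forall>x y. W x y = 0 \<or> W x y = 1 \<Longrightarrow> A \<in> idx \<Longrightarrow> 0 \<le> cheeger W"
  unfolding cheeger_eq
  by (rule cINF_greatest) (auto intro!: ratio_nonneg)

lemma unit_in[simp]: "{0..1} \<in> unit_sets" by (simp add: unit_sets_def)

lemma cheeger_Wn: assumes n: "3 \<le> n"
  shows "0 \<le> cheeger (Wn n)" "cheeger (Wn n) \<le> 1250 * (real n)^2 * exp (- real n)"
proof -
  note nf = num_facts[OF n]
  note db = dd_bound[OF n]
  note nn = n_facts[OF n]
  define C where "C = {c1 n..c2 n}"
  define B where "B = {0..1} - C"
  have mC: "measure lebesgue C = 2 * dd n + 2 / real n" using nf by (simp add: C_def)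
  have Cu: "C \<in> unit_sets" using nf by (auto simp: unit_sets_def C_def)
  have Bu: "B \<in> unit_sets" by (auto simp: unit_sets_def B_def C_def)
  have q2: "2 / real n = 2 * (1 / real n)" by simp
  have mC01: "0 < 2 * dd n + 2 / real n" "2 * dd n + 2 / real n < 1" unfolding q2 using db nn by linarith+
  have Cidx: "C \<in> idx" unfolding idx_def using Cu mC mC01 by auto
  show "0 \<le> cheeger (Wn n)" by (rule cheeger_ge[OF Wn01 Cidx])
  define SL where "SL = {c1 n..pp n}"
  define SR where "SR = {qq n..c2 n}"
  have e: "e_W (Wn n) C B \<le> 2 * dd n"
  proof -
    let ?U = "SL \<times> {0..1} \<union> SR \<times> {0..1}"
    have "e_W (Wn n) C B \<le> measure M2 ?U"
    proof (rule eW_upper[OF Wn01 Wn_meas])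
      show "?U \<in> fmeasurable M2" using nf by (intro unit_sq_fin) (auto simp: SL_def SR_def)
      show "C \<times> B \<inter> Eset (Wn n) \<subseteq> ?U"
        using nf by (auto simp: Eset_def Wn_eq C_def B_def SL_def SR_def)
      show "C \<in> sets lebesgue" "B \<in> sets lebesgue" by (auto simp: C_def B_def)
    qed
    also have "\<dots> \<le> measure M2 (SL \<times> {0..1}) + measure M2 (SR \<times> {0..1})"
      by (rule measure_Un_le) (auto simp: SL_def SR_def)
    also have "\<dots> = 2 * dd n"
      using nf by (simp add: prod_meas SL_def SR_def)
    finally show ?thesis .
  qed
  have vC: "(2 * dd n + 2 / real n) * (2 * dd n + 2 / real n) \<le> vol_W (Wn n) C"
    unfolding vol_W_def mC[symmetric]
    by (rule rect_lower[OF Wn01 Wn_meas Cu unit_in]) (use nf in \<open>auto simp: C_def Wn_eq\<close>)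
  have vB: "(1/25) * (1/25) \<le> vol_W (Wn n) B"
  proof -
    have "measure lebesgue {0..1/25::real} * measure lebesgue {24/25..1::real} \<le> vol_W (Wn n) B"
      unfolding vol_W_def
      by (rule rect_lower[OF Wn01 Wn_meas Bu unit_in]) (use nf in \<open>auto simp: C_def B_def Wn_eq\<close>)
    then show ?thesis by simp
  qed
  define x where "x = 1 / real n"
  have x: "0 < x" "x \<le> 1/3" using nn by (auto simp: x_def)
  have m0: "x^2/625 \<le> min (vol_W (Wn n) C) (vol_W (Wn n) B)"
  proof -
    have "x^2/625 \<le> (2 * dd n + 2 * x) * (2 * dd n + 2 * x)"
    proof -
      have h1: "x \<le> 2*dd n + 2*x" using x db by linarith
      have h2: "x*x \<le> (2*dd n + 2*x)*(2*dd n + 2*x)" using h1 x by (intro mult_mono) auto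
      have h3: "x^2/625 \<le> x*x" using x by (simp add: power2_eq_square)
      show ?thesis using h2 h3 by linarith
    qed
    moreover have "x^2/625 \<le> (1/25) * (1/25)"
    proof -
      have "x*x \<le> 1" using x by (intro mult_le_one) auto
      then show ?thesis by (simp add: power2_eq_square)
    qed
    moreover have "2 / real n = 2 * x" by (simp add: x_def)
    ultimately show ?thesis using vC vB by (simp only: min.bounded_iff) linarith
  qed
  have "cheeger (Wn n) \<le> ratio (Wn n) C" by (rule cheeger_le[OF Wn01 Cidx])
  also have "\<dots> \<le> (2 * dd n) / (x^2/625)"
    unfolding ratio_def B_def[symmetric]
    by (rule frac_le) (use e m0 x db eW_nonneg[OF Wn01] in auto)
  also have "\<dots> = 1250 * (real n)^2 * exp (- real n)"
    using x by (simp add: x_def dd_def field_simps)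
  finally show "cheeger (Wn n) \<le> 1250 * (real n)^2 * exp (- real n)" .
qed

lemma agree: assumes n: "3 \<le> n" and xy: "x \<in> {0..1}" "y \<in> {0..1}" "x \<notin> {c1 n..c2 n}" "y \<notin> {c1 n..c2 n}"
  shows "Wn n x y = Wlim x y"
  using num_facts[OF n] xy unfolding Wn_eq Wlim_def by auto

lemma L1_bound: assumes n: "3 \<le> n"
  shows "0 \<le> L1_dist (Wn n) Wlim" "L1_dist (Wn n) Wlim \<le> 4 * dd n + 4 / real n"
proof -
  note nf = num_facts[OF n]
  let ?G = "\<lambda>z. \<bar>Wn n (fst z) (snd z) - Wlim (fst z) (snd z)\<bar>"
  have G01: "\<forall>z. ?G z = 0 \<or> ?G z = 1" by (auto simp: Wn_def Wlim_def)
  have Gm: "?G \<in> borel_measurable M2"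
    by (intro borel_measurable_abs borel_measurable_diff Wn_meas Wlim_meas)
  have D: "{z. ?G z = 1} \<in> sets M2"
    using measurable_sets[OF Gm, of "{1}"] by (simp add: space_pair_measure vimage_def)
  have eq: "L1_dist (Wn n) Wlim = measure M2 (({0..1} \<times> {0..1}) \<inter> {z. ?G z = 1})"
    unfolding L1_dist_def by (rule int01[OF G01])
  show "0 \<le> L1_dist (Wn n) Wlim" unfolding eq by simp
  define C where "C = {c1 n..c2 n}"
  let ?U = "C \<times> {0..1} \<union> {0..1} \<times> C"
  have "measure M2 (({0..1} \<times> {0..1}) \<inter> {z. ?G z = 1}) \<le> measure M2 ?U"
  proof (rule measure_mono_fmeasurable)
    show "({0..1} \<times> {0..1}) \<inter> {z. ?G z = 1} \<subseteq> ?U"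
    proof
      fix z assume z: "z \<in> ({0..1} \<times> {0..1}) \<inter> {z. ?G z = 1}"
      obtain x y where zz: "z = (x, y)" by fastforce
      show "z \<in> ?U"
      proof (rule ccontr)
        assume "z \<notin> ?U"
        then have "x \<notin> C" "y \<notin> C" using z zz by auto
        then have "Wn n x y = Wlim x y" using agree[OF n] z zz C_def by auto
        then show False using z zz by simp
      qed
    qed
    show "({0..1} \<times> {0..1}) \<inter> {z. ?G z = 1} \<in> sets M2" using D by auto
    show "?U \<in> fmeasurable M2" using nf by (intro unit_sq_fin) (auto simp: C_def)
  qed
  also have "\<dots> \<le> measure M2 (C \<times> {0..1}) + measure M2 ({0..1} \<times> C)"
    by (rule measure_Un_le) (auto simp: C_def)
  also have "\<dots> = 2 * (c2 n - c1 n)"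
    using nf by (simp add: prod_meas C_def)
  also have "\<dots> = 4 * dd n + 4 / real n" using nf by simp
  finally show "L1_dist (Wn n) Wlim \<le> 4 * dd n + 4 / real n" unfolding eq .
qed

definition LL :: "real set" where "LL = {0..1/2}"
definition RR :: "real set" where "RR = {0..1} - LL"

lemma LL_RR: "LL \<in> sets lebesgue" "RR \<in> sets lebesgue" "LL \<subseteq> {0..1}" "RR \<subseteq> {0..1}"
  "measure lebesgue LL = 1/2" "measure lebesgue RR = 1/2"
proof -
  show "LL \<in> sets lebesgue" "RR \<in> sets lebesgue" "LL \<subseteq> {0..1}" "RR \<subseteq> {0..1}"
    by (auto simp: LL_def RR_def)
  show "measure lebesgue LL = 1/2" by (simp add: LL_def)
  show "measure lebesgue RR = 1/2" unfolding RR_def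
    by (subst measure_Diff) (auto simp: LL_def emeas_unit_fin)
qed

lemma eWlim: assumes A: "A \<in> unit_sets" and B: "B \<in> unit_sets"
  shows "e_W Wlim A B = measure lebesgue (A \<inter> LL) * measure lebesgue (B \<inter> RR)
     + measure lebesgue (A \<inter> RR) * measure lebesgue (B \<inter> LL)"
proof -
  have AB: "A \<subseteq> {0..1}" "B \<subseteq> {0..1}" "A \<in> sets lebesgue" "B \<in> sets lebesgue"
    using A B by (auto simp: unit_sets_def)
  note lr = LL_RR
  have seteq: "(A \<times> B) \<inter> Eset Wlim = (A \<inter> LL) \<times> (B \<inter> RR) \<union> (A \<inter> RR) \<times> (B \<inter> LL)"
    using AB by (auto simp: Eset_def Wlim_def LL_def RR_def split: if_splits)
  have f1: "(A \<inter> LL) \<times> (B \<inter> RR) \<in> fmeasurable M2" "(A \<inter> RR) \<times> (B \<inter> LL) \<in> fmeasurable M2"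
    using AB lr by (auto intro!: unit_sq_fin)
  have "e_W Wlim A B = measure M2 ((A \<inter> LL) \<times> (B \<inter> RR) \<union> (A \<inter> RR) \<times> (B \<inter> LL))"
    unfolding eW01[OF Wlim01] seteq ..
  also have "\<dots> = measure M2 ((A \<inter> LL) \<times> (B \<inter> RR)) + measure M2 ((A \<inter> RR) \<times> (B \<inter> LL))"
    using f1 by (intro measure_Union) (auto simp: RR_def fmeasurable_def less_top)
  also have "\<dots> = measure lebesgue (A \<inter> LL) * measure lebesgue (B \<inter> RR)
     + measure lebesgue (A \<inter> RR) * measure lebesgue (B \<inter> LL)"
  proof -
    have p1: "measure M2 ((A \<inter> LL) \<times> (B \<inter> RR)) = measure lebesgue (A \<inter> LL) * measure lebesgue (B \<inter> RR)"
      by (rule prod_meas) (use AB lr in auto)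
    have p2: "measure M2 ((A \<inter> RR) \<times> (B \<inter> LL)) = measure lebesgue (A \<inter> RR) * measure lebesgue (B \<inter> LL)"
      by (rule prod_meas) (use AB lr in auto)
    show ?thesis by (simp only: p1 p2)
  qed
  finally show ?thesis .
qed

lemma ratio_Wlim: assumes A: "A \<in> unit_sets"
  shows "ratio Wlim A = (let a = measure lebesgue (A \<inter> LL); b = measure lebesgue (A \<inter> RR) in
     (a*(1/2-b) + b*(1/2-a)) / min (a*(1/2)+b*(1/2)) ((1/2-a)*(1/2)+(1/2-b)*(1/2)))"
    and "measure lebesgue A = measure lebesgue (A \<inter> LL) + measure lebesgue (A \<inter> RR)"
    and "0 \<le> measure lebesgue (A \<inter> LL)" "measure lebesgue (A \<inter> LL) \<le> 1/2"
    and "0 \<le> measure lebesgue (A \<inter> RR)" "measure lebesgue (A \<inter> RR) \<le> 1/2"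
proof -
  have As: "A \<subseteq> {0..1}" "A \<in> sets lebesgue" using A by (auto simp: unit_sets_def)
  note lr = LL_RR
  let ?B = "{0..1} - A"
  have Bu: "?B \<in> unit_sets" using As by (auto simp: unit_sets_def)
  have fin: "emeasure lebesgue LL \<noteq> \<infinity>" "emeasure lebesgue RR \<noteq> \<infinity>"
    by (rule emeas_unit_fin[OF LL_RR(3)]) (rule emeas_unit_fin[OF LL_RR(4)])
  have bL: "measure lebesgue (?B \<inter> LL) = 1/2 - measure lebesgue (A \<inter> LL)"
  proof -
    have "?B \<inter> LL = LL - (A \<inter> LL)" using lr by auto
    then show ?thesis using lr As fin by (simp add: measure_Diff)
  qed
  have bR: "measure lebesgue (?B \<inter> RR) = 1/2 - measure lebesgue (A \<inter> RR)"
  proof -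
    have "?B \<inter> RR = RR - (A \<inter> RR)" using lr by auto
    then show ?thesis using lr As fin by (simp add: measure_Diff)
  qed
  have uL: "{0..1} \<inter> LL = LL" "{0..1} \<inter> RR = RR" using lr by auto
  have "A = (A \<inter> LL) \<union> (A \<inter> RR)" using As by (auto simp: RR_def)
  then have "measure lebesgue A = measure lebesgue ((A \<inter> LL) \<union> (A \<inter> RR))" by simp
  also have "\<dots> = measure lebesgue (A \<inter> LL) + measure lebesgue (A \<inter> RR)"
  proof -
    have f1: "emeasure lebesgue (A \<inter> LL) \<noteq> \<infinity>" by (rule emeas_unit_fin) (use As in auto)
    have f2: "emeasure lebesgue (A \<inter> RR) \<noteq> \<infinity>" by (rule emeas_unit_fin) (use As in auto)
    show ?thesis by (rule measure_Union[OF f1 f2]) (use As lr in \<open>auto simp: RR_def\<close>)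
  qed
  finally show "measure lebesgue A = measure lebesgue (A \<inter> LL) + measure lebesgue (A \<inter> RR)" .
  show "0 \<le> measure lebesgue (A \<inter> LL)" "0 \<le> measure lebesgue (A \<inter> RR)" by auto
  show "measure lebesgue (A \<inter> LL) \<le> 1/2"
  proof -
    have "measure lebesgue (A \<inter> LL) \<le> measure lebesgue LL"
      by (rule measure_mono_fmeasurable[OF _ _ unit_fmeas[OF lr(1) lr(3)]]) (use As lr in auto)
    then show ?thesis using lr(5) by linarith
  qed
  show "measure lebesgue (A \<inter> RR) \<le> 1/2"
  proof -
    have "measure lebesgue (A \<inter> RR) \<le> measure lebesgue RR"
      by (rule measure_mono_fmeasurable[OF _ _ unit_fmeas[OF lr(2) lr(4)]]) (use As lr in auto)
    then show ?thesis using lr(6) by linarith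
  qed
  have e1: "e_W Wlim A ?B = measure lebesgue (A \<inter> LL) * (1/2 - measure lebesgue (A \<inter> RR))
      + measure lebesgue (A \<inter> RR) * (1/2 - measure lebesgue (A \<inter> LL))"
    by (simp only: eWlim[OF A Bu] bL bR)
  have e2: "vol_W Wlim A = measure lebesgue (A \<inter> LL) * (1/2) + measure lebesgue (A \<inter> RR) * (1/2)"
    unfolding vol_W_def by (simp only: eWlim[OF A unit_in] uL lr(5,6))
  have e3: "vol_W Wlim ?B = (1/2 - measure lebesgue (A \<inter> LL)) * (1/2) + (1/2 - measure lebesgue (A \<inter> RR)) * (1/2)"
    unfolding vol_W_def by (simp only: eWlim[OF Bu unit_in] uL lr(5,6) bL bR)
  show "ratio Wlim A = (let a = measure lebesgue (A \<inter> LL); b = measure lebesgue (A \<inter> RR) in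
     (a*(1/2-b) + b*(1/2-a)) / min (a*(1/2)+b*(1/2)) ((1/2-a)*(1/2)+(1/2-b)*(1/2)))"
    unfolding ratio_def e1 e2 e3 Let_def ..
qed

lemma cheeger_Wlim: "cheeger Wlim = 1/2"
proof -
  have lower: "1/2 \<le> ratio Wlim A" if "A \<in> idx" for A
  proof -
    have A: "A \<in> unit_sets" "0 < measure lebesgue A" "measure lebesgue A < 1" using that by (auto simp: idx_def)
    note r = ratio_Wlim[OF A(1)]
    show ?thesis unfolding r(1) Let_def
      by (rule arith_W) (use r A in auto)
  qed
  define A0 where "A0 = {0..1/4} \<union> {3/4..1::real}"
  have A0u: "A0 \<in> unit_sets" by (auto simp: unit_sets_def A0_def)
  have i1: "A0 \<inter> LL = {0..1/4}" by (auto simp: A0_def LL_def)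
  have i2: "A0 \<inter> RR = {3/4..1}" by (auto simp: A0_def LL_def RR_def)
  note r0 = ratio_Wlim[OF A0u]
  have m0: "measure lebesgue A0 = 1/2" using r0(2) by (simp add: i1 i2)
  have A0i: "A0 \<in> idx" using A0u m0 by (simp add: idx_def)
  have v0: "ratio Wlim A0 = 1/2" unfolding r0(1) i1 i2 Let_def by simp
  show ?thesis unfolding cheeger_eq
    by (rule cInf_eq_minimum[of "1/2"]) (use A0i v0 lower in auto)
qed

lemma graphon_Wn: "is_graphon (Wn n)"
  unfolding is_graphon_def using Wn_meas[of n] by (auto simp: Wn_def)
lemma graphon_Wlim: "is_graphon Wlim"
  unfolding is_graphon_def using Wlim_meas by (auto simp: Wlim_def)

theorem mainTheorem20:
  shows "(\<forall>n\<ge>3. is_graphon (Wn n) \<and> graphon_connected (Wn n)) \<and> is_graphon Wlim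
    \<and> (\<lambda>n. L1_dist (Wn n) Wlim) \<longlonglongrightarrow> 0
    \<and> (\<lambda>n. cheeger (Wn n)) \<longlonglongrightarrow> 0
    \<and> cheeger Wlim = 1/2
    \<and> \<not> ((\<lambda>n. cheeger (Wn n)) \<longlonglongrightarrow> cheeger Wlim)"
proof -
  have ev: "eventually (\<lambda>n. 3 \<le> n) sequentially" by (rule eventually_ge_at_top)
  have L1: "(\<lambda>n. L1_dist (Wn n) Wlim) \<longlonglongrightarrow> 0"
  proof (rule tendsto_sandwich[where f="\<lambda>_. 0" and h="\<lambda>n. 4 * exp (- real n) + 4 / real n"])
    show "eventually (\<lambda>n. 0 \<le> L1_dist (Wn n) Wlim) sequentially"
      using ev by eventually_elim (rule L1_bound)
    show "eventually (\<lambda>n. L1_dist (Wn n) Wlim \<le> 4 * exp (- real n) + 4 / real n) sequentially"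
      using ev by eventually_elim (use L1_bound in \<open>auto simp: dd_def\<close>)
    show "(\<lambda>n. 0::real) \<longlonglongrightarrow> 0" by simp
    show "(\<lambda>n. 4 * exp (- real n) + 4 / real n) \<longlonglongrightarrow> 0" by real_asymp
  qed
  have Ch: "(\<lambda>n. cheeger (Wn n)) \<longlonglongrightarrow> 0"
  proof (rule tendsto_sandwich[where f="\<lambda>_. 0" and h="\<lambda>n. 1250 * (real n)^2 * exp (- real n)"])
    show "eventually (\<lambda>n. 0 \<le> cheeger (Wn n)) sequentially"
      using ev by eventually_elim (rule cheeger_Wn)
    show "eventually (\<lambda>n. cheeger (Wn n) \<le> 1250 * (real n)^2 * exp (- real n)) sequentially"
      using ev by eventually_elim (rule cheeger_Wn)
    show "(\<lambda>n. 0::real) \<longlonglongrightarrow> 0" by simp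
    show "(\<lambda>n. 1250 * (real n)^2 * exp (- real n)) \<longlonglongrightarrow> 0" by real_asymp
  qed
  have neg: "\<not> ((\<lambda>n. cheeger (Wn n)) \<longlonglongrightarrow> cheeger Wlim)"
  proof
    assume "(\<lambda>n. cheeger (Wn n)) \<longlonglongrightarrow> cheeger Wlim"
    then have "cheeger Wlim = 0" using Ch LIMSEQ_unique by blast
    then show False using cheeger_Wlim by simp
  qed
  show ?thesis using graphon_Wn Wn_conn graphon_Wlim L1 Ch cheeger_Wlim neg by blast
qed

end
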